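(* Under Total Store Order, $\lim_{i\to\infty}\Pr[\text{the instruction at position } i \text{ of } S_i \text{ has type } \mathrm{ST}]=2/3$ (where $m\ge i$).
   Context: Fix $m\ge 1$. A random program is a sequence $x_1,\dots,x_{m+2}$ of memory operations, each with a type in $\{\mathrm{LD},\mathrm{ST}\}$: $x_1,\dots,x_m$ have i.i.d. types, each $\mathrm{ST}$ with probability $1/2$ and $\mathrm{LD}$ with probability $1/2$; $x_{m+1}$ (the critical load) has type $\mathrm{LD}$ and $x_{m+2}$ (the critical store) has type $\mathrm{ST}$. The initial order is $S_0=(x_1,\dots,x_{m+2})$. A memory model is specified by the set of ordered type pairs $(\tau_1,\tau_2)$ for which an instruction of type $\tau_2$ may be moved ahead of an immediately preceding instruction of type $\tau_1$: Sequential Consistency (SC) allows no pair; Total Store Order (TSO) allows only the pair $(\mathrm{ST},\mathrm{LD})$ (a load may move ahead of a preceding store); Weak Ordering (WO) allows all four pairs. The settling process runs rounds $r=1,\dots,m+2$. Before round $r$, the current order $S_{r-1}$ consists of $x_1,\dots,x_{r-1}$ in some order in positions $1,\dots,r-1$, followed by $x_r,\dots,x_{m+2}$ in positions $r,\dots,m+2$. In round $r$, instruction $x_r$ (starting at position $r$) repeatedly attempts to swap with the instruction immediately preceding it in the current order: the attempt fails automatically if the pair (type of the preceding instruction, type of $x_r$) is not allowed by the memory model, or if $x_r$ is the critical store and the preceding instruction is the critical load; otherwise the attempt succeeds independently with probability $1/2$. The round ends when an attempt fails or $x_r$ reaches position $1$; the resulting order is $S_r$. *)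

theory Defs
  imports "HOL-Probability.Probability"
begin

datatype ity = LD | ST

text \<open>A memory model: the set of allowed ordered type pairs (preceding type, moving type).\<close>
type_synonym mmodel = "ity \<Rightarrow> ity \<Rightarrow> bool"

definition SC :: mmodel where "SC = (\<lambda>_ _. False)"
definition TSO :: mmodel where "TSO = (\<lambda>a b. a = ST \<and> b = LD)"
definition WO :: mmodel where "WO = (\<lambda>_ _. True)"

text \<open>i.i.d. uniform types for x_1..x_n (list entry k-1 is the type of x_k).\<close>
fun rand_types :: "nat \<Rightarrow> ity list pmf" where
  "rand_types 0 = return_pmf []"
| "rand_types (Suc n) =
     bind_pmf (bernoulli_pmf (1/2)) (\<lambda>b.
     bind_pmf (rand_types n) (\<lambda>ts. return_pmf ((if b then ST else LD) # ts)))"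

text \<open>Type of instruction x_k (labels 1..m+2): x_{m+1} critical load, x_{m+2} critical store.\<close>
definition ty_of :: "nat \<Rightarrow> ity list \<Rightarrow> nat \<Rightarrow> ity" where
  "ty_of m ts k = (if k \<le> m then ts ! (k - 1) else if k = m + 1 then LD else ST)"

text \<open>The moving instruction sits at 0-based list index p and repeatedly attempts to
  swap with its predecessor.  Orders are lists of instruction labels.\<close>
fun settle :: "mmodel \<Rightarrow> (nat \<Rightarrow> ity) \<Rightarrow> nat \<Rightarrow> nat list \<Rightarrow> nat \<Rightarrow> nat list pmf" where
  "settle A ty m xs 0 = return_pmf xs"
| "settle A ty m xs (Suc p) =
     (let y = xs ! p; x = xs ! Suc p in
      if \<not> A (ty y) (ty x) \<or> (x = m + 2 \<and> y = m + 1) then return_pmf xs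
      else bind_pmf (bernoulli_pmf (1/2)) (\<lambda>b.
             if b then settle A ty m (xs[p := x, Suc p := y]) p else return_pmf xs))"

text \<open>The order S_r after rounds 1..r (S_0 = (x_1,...,x_{m+2})).  In round r+1,
  x_{r+1} starts at 1-based position r+1, i.e. 0-based index r.\<close>
fun run :: "mmodel \<Rightarrow> (nat \<Rightarrow> ity) \<Rightarrow> nat \<Rightarrow> nat \<Rightarrow> nat list pmf" where
  "run A ty m 0 = return_pmf [1..<m + 3]"
| "run A ty m (Suc r) = bind_pmf (run A ty m r) (\<lambda>s. settle A ty m s r)"

definition pos_type :: "mmodel \<Rightarrow> nat \<Rightarrow> nat \<Rightarrow> ity pmf" where
  "pos_type A m i =
     bind_pmf (rand_types m) (\<lambda>ts.
     map_pmf (\<lambda>s. ty_of m ts (s ! (i - 1))) (run A (ty_of m ts) m i))"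

end

theory Submission imports Defs begin

definition tyi :: "bool \<Rightarrow> ity" where "tyi b = (if b then ST else LD)"

lemma inj_tyi: "inj tyi" by (auto simp: inj_def tyi_def split: if_splits)

definition W :: "real \<Rightarrow> ity pmf" where "W q = map_pmf tyi (bernoulli_pmf q)"

lemma pmf_W: "0 \<le> q \<Longrightarrow> q \<le> 1 \<Longrightarrow> pmf (W q) ST = q"
proof -
  assume a: "0 \<le> q" "q \<le> 1"
  have "pmf (W q) ST = pmf (map_pmf tyi (bernoulli_pmf q)) (tyi True)" by (simp add: W_def tyi_def)
  also have "\<dots> = q" using a by (simp add: pmf_map_inj'[OF inj_tyi])
  finally show ?thesis .
qed

fun G :: "ity list \<Rightarrow> real" where
  "G [] = 0"
| "G (t # rs) = (if t = ST then 1 else G rs / 2)"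

lemma G_bounds: "0 \<le> G rs \<and> G rs \<le> 1" by (induction rs) auto

lemma rand_types_alt: "rand_types (Suc n) = bind_pmf (bernoulli_pmf (1/2)) (\<lambda>b. map_pmf (Cons (tyi b)) (rand_types n))"
  by (simp add: map_pmf_def tyi_def)

declare rand_types.simps(2)[simp del]

lemma rand_types_len: "ts \<in> set_pmf (rand_types n) \<Longrightarrow> length ts = n"
  by (induction n arbitrary: ts) (auto simp: rand_types_alt)

lemma rand_types_take: "i \<le> n \<Longrightarrow> map_pmf (take i) (rand_types n) = rand_types i"
proof (induction i arbitrary: n)
  case 0
  then show ?case by (simp add: map_pmf_const)
next
  case (Suc i)
  then obtain n' where n: "n = Suc n'" "i \<le> n'" by (cases n) auto
  show ?case unfolding n rand_types_alt map_bind_pmf pmf.map_comp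
    by (simp add: o_def Suc.IH[OF n(2), symmetric] pmf.map_comp)
qed

lemma rand_types_snoc: "rand_types (Suc n) = bind_pmf (rand_types n) (\<lambda>ts. map_pmf (\<lambda>b. ts @ [tyi b]) (bernoulli_pmf (1/2)))"
proof (induction n)
  case 0
  then show ?case by (simp add: rand_types_alt bind_return_pmf map_pmf_def bind_map_pmf)
next
  case (Suc n)
  show ?case
    apply (subst rand_types_alt)
    apply (subst Suc)
    apply (simp add: rand_types_alt map_bind_pmf bind_map_pmf bind_assoc_pmf pmf.map_comp o_def)
    done
qed

lemma rand_types_rev: "map_pmf rev (rand_types n) = rand_types n"
proof (induction n)
  case 0
  then show ?case by simp
next
  case (Suc n)
  have "map_pmf rev (rand_types (Suc n)) = bind_pmf (map_pmf rev (rand_types n)) (\<lambda>ts. map_pmf (\<lambda>b. tyi b # ts) (bernoulli_pmf (1/2)))"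
    by (simp add: rand_types_snoc map_bind_pmf bind_map_pmf pmf.map_comp o_def)
  also have "\<dots> = bind_pmf (rand_types n) (\<lambda>ts. map_pmf (\<lambda>b. tyi b # ts) (bernoulli_pmf (1/2)))"
    by (simp only: Suc)
  also have "\<dots> = rand_types (Suc n)"
    unfolding rand_types_alt map_pmf_def by (rule bind_commute_pmf)
  finally show ?case .
qed

lemma pmf_W_G2: "pmf (W (G rs / 2)) ST = G rs / 2"
  using G_bounds[of rs] by (intro pmf_W) auto

lemma intG: "(\<integral>rs. G rs \<partial>measure_pmf p) = pmf (bind_pmf p (\<lambda>rs. W (G rs))) ST"
  by (simp add: pmf_bind pmf_W G_bounds)

lemma EG: "(\<integral>rs. G rs \<partial>measure_pmf (rand_types n)) = 2/3 - 2/3 * (1/4)^n"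
proof (induction n)
  case 0
  then show ?case by simp
next
  case (Suc n)
  have "(\<integral>rs. G rs \<partial>measure_pmf (rand_types (Suc n))) = 
     pmf (bind_pmf (bernoulli_pmf (1/2)) (\<lambda>b. bind_pmf (rand_types n) (\<lambda>rs. W (G (tyi b # rs))))) ST"
    by (simp add: intG rand_types_alt bind_map_pmf bind_assoc_pmf)
  also have "\<dots> = 1/2 * (\<integral>rs. 1 \<partial>measure_pmf (rand_types n)) + 1/2 * (\<integral>rs. G rs / 2 \<partial>measure_pmf (rand_types n))"
    by (simp add: pmf_bind pmf_W G_bounds tyi_def pmf_W_G2)
  also have "\<dots> = 1/2 + 1/4 * (\<integral>rs. G rs \<partial>measure_pmf (rand_types n))"
    by simp
  also have "\<dots> = 2/3 - 2/3 * (1/4)^Suc n" using Suc by (simp add: field_simps)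
  finally show ?case .
qed

lemma settle_pres: "p < length xs \<Longrightarrow> s \<in> set_pmf (settle A ty m xs p) \<Longrightarrow>
   length s = length xs \<and> (\<forall>k. p < k \<longrightarrow> k < length xs \<longrightarrow> s ! k = xs ! k)"
proof (induction p arbitrary: xs s)
  case 0
  then show ?case by simp
next
  case (Suc p)
  show ?case
  proof (cases "\<not> A (ty (xs ! p)) (ty (xs ! Suc p)) \<or> (xs ! Suc p = m + 2 \<and> xs ! p = m + 1)")
    case True
    have "settle A ty m xs (Suc p) = return_pmf xs"
      by (subst settle.simps, unfold Let_def, rule if_P[OF True])
    then show ?thesis using Suc.prems by simp
  next
    case False
    with Suc.prems(2) consider "s = xs" | "s \<in> set_pmf (settle A ty m (xs[p := xs ! Suc p, Suc p := xs ! p]) p)"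
      by (auto simp: Let_def split: if_splits)
    then show ?thesis
    proof cases
      case 2
      from Suc.IH[OF _ 2] Suc.prems(1) show ?thesis by auto
    qed simp
  qed
qed

lemma run_inv: "r \<le> m + 2 \<Longrightarrow> s \<in> set_pmf (run A ty m r) \<Longrightarrow>
   length s = m + 2 \<and> (\<forall>k. r \<le> k \<longrightarrow> k < m + 2 \<longrightarrow> s ! k = Suc k)"
proof (induction r arbitrary: s)
  case 0
  then show ?case by simp
next
  case (Suc r)
  from Suc.prems obtain s0 where s0: "s0 \<in> set_pmf (run A ty m r)" "s \<in> set_pmf (settle A ty m s0 r)"
    by auto
  from Suc.IH[OF _ s0(1)] Suc.prems(1) have I: "length s0 = m + 2" "\<forall>k. r \<le> k \<longrightarrow> k < m + 2 \<longrightarrow> s0 ! k = Suc k"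
    by auto
  from settle_pres[OF _ s0(2)] I Suc.prems(1) show ?case by auto
qed

declare run.simps(2)[simp del]

lemma settle_top:
  assumes "Suc p < length xs" "xs ! Suc p \<noteq> m + 2"
  shows "map_pmf (\<lambda>s. ty (s ! Suc p)) (settle TSO ty m xs (Suc p)) =
    (if ty (xs ! Suc p) = LD \<and> ty (xs ! p) = ST then map_pmf tyi (bernoulli_pmf (1/2))
     else return_pmf (ty (xs ! Suc p)))"
proof (cases "ty (xs ! Suc p) = LD \<and> ty (xs ! p) = ST")
  case True
  let ?xs' = "xs[p := xs ! Suc p, Suc p := xs ! p]"
  have "map_pmf (\<lambda>s. ty (s ! Suc p)) (settle TSO ty m ?xs' p) = return_pmf ST"
    unfolding map_pmf_eq_return_pmf_iff
  proof
    fix s assume "s \<in> set_pmf (settle TSO ty m ?xs' p)"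
    from settle_pres[OF _ this] assms(1) have "s ! Suc p = ?xs' ! Suc p" by auto
    then show "ty (s ! Suc p) = ST" using True assms(1) by simp
  qed
  then have "map_pmf (\<lambda>s. ty (s ! Suc p)) (settle TSO ty m xs (Suc p)) =
     bind_pmf (bernoulli_pmf (1/2)) (\<lambda>b. return_pmf (tyi b))"
    using True assms
    apply (simp add: Let_def TSO_def map_bind_pmf)
    apply (rule bind_pmf_cong[OF refl])
    apply (auto simp: tyi_def)
    done
  then show ?thesis using True by (simp add: map_pmf_def)
next
  case False
  then show ?thesis using assms by (auto simp: Let_def TSO_def)
qed

lemma pmf_tyi_coin: "pmf (map_pmf tyi (bernoulli_pmf (1/2))) ST = 1/2"
  using pmf_W[of "1/2"] by (simp add: W_def)

lemma run_rec:
  assumes "Suc (Suc r) \<le> m"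
  shows "pmf (map_pmf (\<lambda>s. ty (s ! Suc r)) (run TSO ty m (Suc (Suc r)))) ST =
    (if ty (Suc (Suc r)) = ST then 1 else pmf (map_pmf (\<lambda>s. ty (s ! r)) (run TSO ty m (Suc r))) ST / 2)"
proof -
  let ?P = "run TSO ty m (Suc r)"
  define \<Phi> where "\<Phi> t = (if ty (Suc (Suc r)) = LD \<and> t = ST then map_pmf tyi (bernoulli_pmf (1/2))
      else return_pmf (ty (Suc (Suc r))))" for t
  have "map_pmf (\<lambda>s. ty (s ! Suc r)) (run TSO ty m (Suc (Suc r))) = bind_pmf ?P (\<lambda>s. \<Phi> (ty (s ! r)))"
    unfolding run.simps(2)[of _ _ _ "Suc r"] map_bind_pmf
  proof (rule bind_pmf_cong[OF refl])
    fix s assume s: "s \<in> set_pmf ?P"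
    from run_inv[OF _ s] assms have "length s = m + 2" "s ! Suc r = Suc (Suc r)" by auto
    then show "map_pmf (\<lambda>s. ty (s ! Suc r)) (settle TSO ty m s (Suc r)) = \<Phi> (ty (s ! r))"
      using assms by (subst settle_top) (auto simp: \<Phi>_def)
  qed
  also have "\<dots> = bind_pmf (map_pmf (\<lambda>s. ty (s ! r)) ?P) \<Phi>" by (simp add: bind_map_pmf)
  finally have eq: "pmf (map_pmf (\<lambda>s. ty (s ! Suc r)) (run TSO ty m (Suc (Suc r)))) ST =
     (\<integral>t. pmf (\<Phi> t) ST \<partial>measure_pmf (map_pmf (\<lambda>s. ty (s ! r)) ?P))"
    by (simp add: pmf_bind)
  show ?thesis
  proof (cases "ty (Suc (Suc r)) = ST")
    case True
    then show ?thesis unfolding eq by (simp add: \<Phi>_def)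
  next
    case False
    then have LD: "ty (Suc (Suc r)) = LD" by (cases "ty (Suc (Suc r))") auto
    have "(\<integral>t. pmf (\<Phi> t) ST \<partial>measure_pmf (map_pmf (\<lambda>s. ty (s ! r)) ?P)) =
       (\<Sum>a\<in>{ST}. pmf (\<Phi> a) ST * pmf (map_pmf (\<lambda>s. ty (s ! r)) ?P) a)"
    proof (rule integral_measure_pmf_real)
      fix a assume "pmf (\<Phi> a) ST \<noteq> 0"
      then show "a \<in> {ST}" using LD by (cases a) (auto simp: \<Phi>_def)
    qed simp
    then show ?thesis unfolding eq using LD by (simp add: \<Phi>_def pmf_tyi_coin)
  qed
qed

lemma run_G:
  assumes "length ts = m" "Suc r \<le> m"
  shows "pmf (map_pmf (\<lambda>s. ty_of m ts (s ! r)) (run TSO (ty_of m ts) m (Suc r))) ST = G (rev (take (Suc r) ts))"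
  using assms(2)
proof (induction r)
  case 0
  then show ?case using assms(1)
    by (cases ts) (auto simp: run.simps(2) bind_return_pmf ty_of_def nth_append indicator_def)
next
  case (Suc r)
  have tk: "take (Suc (Suc r)) ts = take (Suc r) ts @ [ts ! Suc r]"
    using Suc.prems assms(1) by (simp add: take_Suc_conv_app_nth)
  have ty: "ty_of m ts (Suc (Suc r)) = ts ! Suc r" using Suc.prems by (simp add: ty_of_def)
  show ?case using Suc.prems Suc.IH
    by (simp only: run_rec[OF Suc.prems]) (simp add: tk ty)
qed

lemma pos_type_val:
  assumes "Suc r \<le> m"
  shows "pmf (pos_type TSO m (Suc r)) ST = 2/3 - 2/3 * (1/4)^(Suc r)"
proof -
  have "pmf (pos_type TSO m (Suc r)) ST = (\<integral>ts. G (rev (take (Suc r) ts)) \<partial>measure_pmf (rand_types m))"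
    unfolding pos_type_def pmf_bind
    by (intro integral_cong_AE) (auto simp: AE_measure_pmf_iff run_G[OF rand_types_len assms])
  also have "\<dots> = (\<integral>rs. G rs \<partial>measure_pmf (map_pmf rev (map_pmf (take (Suc r)) (rand_types m))))"
    by simp
  also have "\<dots> = 2/3 - 2/3 * (1/4)^(Suc r)"
    by (simp only: rand_types_take[OF assms] rand_types_rev EG)
  finally show ?thesis .
qed

theorem claim1:
  fixes f :: "nat \<Rightarrow> nat"
  assumes "\<And>i. i \<le> f i" and "\<And>i. 1 \<le> f i"
  shows "(\<lambda>i. pmf (pos_type TSO (f i) i) ST) \<longlonglongrightarrow> 2/3"
proof (rule Lim_transform_eventually)
  show "(\<lambda>i. 2/3 - 2/3 * (1/4::real)^i) \<longlonglongrightarrow> 2/3"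
    by (auto intro!: tendsto_eq_intros LIMSEQ_power_zero)
  show "\<forall>\<^sub>F i in sequentially. 2/3 - 2/3 * (1/4::real)^i = pmf (pos_type TSO (f i) i) ST"
  proof (rule eventually_sequentiallyI[of 1])
    fix i :: nat assume "1 \<le> i"
    then obtain r where "i = Suc r" by (cases i) auto
    then show "2/3 - 2/3 * (1/4::real)^i = pmf (pos_type TSO (f i) i) ST"
      using pos_type_val[of r "f i"] assms(1)[of i] by simp
  qed
qed

end
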